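(* Let $(l,k,b)$ be a suspension triplet for $(X_A,\sigma_A)$ and $c=l-k$. Then the zeta function of the flow $\phi_A$ of the one-sided suspension $(S^{l,k}_{A,b},\phi_A)$, $$\zeta_{\phi_A}(s)=\prod_{\tau\in P_{orb}(S^{l,k}_{A,b},\phi_A)}(1-e^{-s\ell(\tau)})^{-1},$$ equals the dynamical zeta function $$\zeta_{A,c}(s)=\exp\Big\{\sum_{n=1}^\infty\frac1n\sum_{x\in\mathrm{Per}_n(X_A)}\exp\Big(-s\sum_{i=0}^{n-1}c(\sigma_A^i(x))\Big)\Big\},$$ where $\mathrm{Per}_n(X_A)=\{x\in X_A:\sigma_A^n(x)=x\}$ (for $s\in\mathbb C$ with sufficiently large real part).
   Context: Let $N>1$ and $A=[A(i,j)]_{i,j=1}^N$ an irreducible $\{0,1\}$-matrix which is not a permutation matrix. $X_A$ is the compact space of sequences $(x_n)_{n\in\mathbb N}$ with $x_n\in\{1,\dots,N\}$ and $A(x_n,x_{n+1})=1$ for all $n$, and $\sigma_A((x_n)_n)=(x_{n+1})_n$. $\mathbb Z_+$, $\mathbb R_+$ are nonnegative integers/reals. $H^A$ is the quotient of $C(X_A,\mathbb Z)$ by $\{u-u\circ\sigma_A: u\in C(X_A,\mathbb Z)\}$, $H^A_+=\{[f]: f\in C(X_A,\mathbb Z_+)\}$; $[f]\in H^A_+$ is an order unit if for every $[u]\in H^A$ there is $n\in\mathbb N$ with $n[f]-[u]\in H^A_+$. A suspension triplet is $(l,k,b)$ with $l,k\in C(X_A,\mathbb R_+)$, $b\in C(X_A,\mathbb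 R)$ such that $c=l-k$ is integer-valued with $[c]$ an order unit, and $l-b$, $k-b\circ\sigma_A$ take values in $\mathbb Z_+$. $S^{l,k}_{A,b}$ is the quotient of $\{(x,r)\in X_A\times\mathbb R: r\ge b(x)\}$ by the equivalence relation generated by $(x,r)\sim(\sigma_A(x),r-c(x))$ whenever $r\ge l(x)$; $[x,r]$ denotes classes, and $\phi_{A,t}([x,r])=[x,r+t]$, $t\in\mathbb R_+$, is its flow. A periodic orbit of the flow is a set $\tau=\{\phi_{A,t}(u):t\in\mathbb R_+\}$ for a point $u$ with $\phi_{A,T}(u)=u$ for some $T>0$; $P_{orb}(S^{l,k}_{A,b},\phi_A)$ is the set of these, and $\ell(\tau)=\min\{t>0:\phi_{A,t}(u)=u\}$ for $u\in\tau$. *)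

theory Defs
  imports "HOL-Analysis.Analysis" "HOL-Combinatorics.Permutations"
begin

text \<open>Matrices are functions nat => nat => nat, indexed by 1..N.\<close>

fun mpow :: "nat \<Rightarrow> (nat \<Rightarrow> nat \<Rightarrow> nat) \<Rightarrow> nat \<Rightarrow> nat \<Rightarrow> nat \<Rightarrow> nat" where
  "mpow N A 0 i j = (if i = j then 1 else 0)"
| "mpow N A (Suc n) i j = (\<Sum>m\<in>{1..N}. mpow N A n i m * A m j)"

definition zero_one_matrix :: "nat \<Rightarrow> (nat \<Rightarrow> nat \<Rightarrow> nat) \<Rightarrow> bool" where
  "zero_one_matrix N A \<longleftrightarrow> (\<forall>i\<in>{1..N}. \<forall>j\<in>{1..N}. A i j \<in> {0, 1})"

definition irreducible_matrix :: "nat \<Rightarrow> (nat \<Rightarrow> nat \<Rightarrow> nat) \<Rightarrow> bool" where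
  "irreducible_matrix N A \<longleftrightarrow> (\<forall>i\<in>{1..N}. \<forall>j\<in>{1..N}. \<exists>n>0. mpow N A n i j > 0)"

definition permutation_matrix :: "nat \<Rightarrow> (nat \<Rightarrow> nat \<Rightarrow> nat) \<Rightarrow> bool" where
  "permutation_matrix N A \<longleftrightarrow>
     (\<exists>p. p permutes {1..N} \<and> (\<forall>i\<in>{1..N}. \<forall>j\<in>{1..N}. A i j = (if p i = j then 1 else 0)))"

text \<open>The one-sided shift space X_A (sequences indexed from 0), with the product topology
  inherited from the library instance on nat => nat (nat carries the discrete topology).\<close>

definition XA :: "nat \<Rightarrow> (nat \<Rightarrow> nat \<Rightarrow> nat) \<Rightarrow> (nat \<Rightarrow> nat) set" where
  "XA N A = {x. (\<forall>n. x n \<in> {1..N}) \<and> (\<forall>n. A (x n) (x (Suc n)) = 1)}"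

definition shift :: "(nat \<Rightarrow> nat) \<Rightarrow> (nat \<Rightarrow> nat)" where
  "shift x = (\<lambda>n. x (Suc n))"

definition Per :: "nat \<Rightarrow> (nat \<Rightarrow> nat \<Rightarrow> nat) \<Rightarrow> nat \<Rightarrow> (nat \<Rightarrow> nat) set" where
  "Per N A n = {x \<in> XA N A. (shift ^^ n) x = x}"

text \<open>C(X_A, Z), realised as real-valued continuous functions on X_A taking integer values.\<close>
definition cont_Z :: "nat \<Rightarrow> (nat \<Rightarrow> nat \<Rightarrow> nat) \<Rightarrow> ((nat \<Rightarrow> nat) \<Rightarrow> real) \<Rightarrow> bool" where
  "cont_Z N A u \<longleftrightarrow> continuous_on (XA N A) u \<and> (\<forall>x\<in>XA N A. u x \<in> \<int>)"

definition cont_Zplus :: "nat \<Rightarrow> (nat \<Rightarrow> nat \<Rightarrow> nat) \<Rightarrow> ((nat \<Rightarrow> nat) \<Rightarrow> real) \<Rightarrow> bool" where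
  "cont_Zplus N A u \<longleftrightarrow> cont_Z N A u \<and> (\<forall>x\<in>XA N A. u x \<ge> 0)"

text \<open>[f] = [g] in H^A: f - g = v - v o sigma_A on X_A for some v in C(X_A,Z).\<close>
definition cohomologous :: "nat \<Rightarrow> (nat \<Rightarrow> nat \<Rightarrow> nat) \<Rightarrow> ((nat \<Rightarrow> nat) \<Rightarrow> real) \<Rightarrow> ((nat \<Rightarrow> nat) \<Rightarrow> real) \<Rightarrow> bool" where
  "cohomologous N A f g \<longleftrightarrow>
     (\<exists>v. cont_Z N A v \<and> (\<forall>x\<in>XA N A. f x - g x = v x - v (shift x)))"

definition in_HA_plus :: "nat \<Rightarrow> (nat \<Rightarrow> nat \<Rightarrow> nat) \<Rightarrow> ((nat \<Rightarrow> nat) \<Rightarrow> real) \<Rightarrow> bool" where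
  "in_HA_plus N A f \<longleftrightarrow> (\<exists>g. cont_Zplus N A g \<and> cohomologous N A f g)"

definition order_unit :: "nat \<Rightarrow> (nat \<Rightarrow> nat \<Rightarrow> nat) \<Rightarrow> ((nat \<Rightarrow> nat) \<Rightarrow> real) \<Rightarrow> bool" where
  "order_unit N A f \<longleftrightarrow> cont_Z N A f \<and> in_HA_plus N A f \<and>
     (\<forall>u. cont_Z N A u \<longrightarrow> (\<exists>n::nat. in_HA_plus N A (\<lambda>x. real n * f x - u x)))"

definition suspension_triplet ::
  "nat \<Rightarrow> (nat \<Rightarrow> nat \<Rightarrow> nat) \<Rightarrow> ((nat \<Rightarrow> nat) \<Rightarrow> real) \<Rightarrow> ((nat \<Rightarrow> nat) \<Rightarrow> real)
     \<Rightarrow> ((nat \<Rightarrow> nat) \<Rightarrow> real) \<Rightarrow> bool" where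
  "suspension_triplet N A l k b \<longleftrightarrow>
     continuous_on (XA N A) l \<and> continuous_on (XA N A) k \<and> continuous_on (XA N A) b \<and>
     (\<forall>x\<in>XA N A. l x \<ge> 0 \<and> k x \<ge> 0) \<and>
     (\<forall>x\<in>XA N A. l x - k x \<in> \<int>) \<and>
     order_unit N A (\<lambda>x. l x - k x) \<and>
     (\<forall>x\<in>XA N A. l x - b x \<in> \<int> \<and> l x - b x \<ge> 0) \<and>
     (\<forall>x\<in>XA N A. k x - b (shift x) \<in> \<int> \<and> k x - b (shift x) \<ge> 0)"

definition susp_dom :: "nat \<Rightarrow> (nat \<Rightarrow> nat \<Rightarrow> nat) \<Rightarrow> ((nat \<Rightarrow> nat) \<Rightarrow> real) \<Rightarrow> ((nat \<Rightarrow> nat) \<times> real) set" where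
  "susp_dom N A b = {(x, r). x \<in> XA N A \<and> r \<ge> b x}"

definition susp_step ::
  "nat \<Rightarrow> (nat \<Rightarrow> nat \<Rightarrow> nat) \<Rightarrow> ((nat \<Rightarrow> nat) \<Rightarrow> real) \<Rightarrow> ((nat \<Rightarrow> nat) \<Rightarrow> real)
     \<Rightarrow> ((nat \<Rightarrow> nat) \<Rightarrow> real) \<Rightarrow> (((nat \<Rightarrow> nat) \<times> real) \<times> ((nat \<Rightarrow> nat) \<times> real)) set" where
  "susp_step N A l k b =
     {((x, r), (shift x, r - (l x - k x))) | x r. (x, r) \<in> susp_dom N A b \<and> r \<ge> l x}"

definition susp_rel ::
  "nat \<Rightarrow> (nat \<Rightarrow> nat \<Rightarrow> nat) \<Rightarrow> ((nat \<Rightarrow> nat) \<Rightarrow> real) \<Rightarrow> ((nat \<Rightarrow> nat) \<Rightarrow> real)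
     \<Rightarrow> ((nat \<Rightarrow> nat) \<Rightarrow> real) \<Rightarrow> (((nat \<Rightarrow> nat) \<times> real) \<times> ((nat \<Rightarrow> nat) \<times> real)) set" where
  "susp_rel N A l k b =
     ((susp_step N A l k b \<union> (susp_step N A l k b)\<inverse>)\<^sup>*) \<inter> (susp_dom N A b \<times> susp_dom N A b)"

definition susp_space ::
  "nat \<Rightarrow> (nat \<Rightarrow> nat \<Rightarrow> nat) \<Rightarrow> ((nat \<Rightarrow> nat) \<Rightarrow> real) \<Rightarrow> ((nat \<Rightarrow> nat) \<Rightarrow> real)
     \<Rightarrow> ((nat \<Rightarrow> nat) \<Rightarrow> real) \<Rightarrow> ((nat \<Rightarrow> nat) \<times> real) set set" where
  "susp_space N A l k b = susp_dom N A b // susp_rel N A l k b"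

definition susp_flow ::
  "nat \<Rightarrow> (nat \<Rightarrow> nat \<Rightarrow> nat) \<Rightarrow> ((nat \<Rightarrow> nat) \<Rightarrow> real) \<Rightarrow> ((nat \<Rightarrow> nat) \<Rightarrow> real)
     \<Rightarrow> ((nat \<Rightarrow> nat) \<Rightarrow> real) \<Rightarrow> real \<Rightarrow> ((nat \<Rightarrow> nat) \<times> real) set \<Rightarrow> ((nat \<Rightarrow> nat) \<times> real) set" where
  "susp_flow N A l k b t P = susp_rel N A l k b `` ((\<lambda>(x, r). (x, r + t)) ` P)"

definition periodic_orbits ::
  "nat \<Rightarrow> (nat \<Rightarrow> nat \<Rightarrow> nat) \<Rightarrow> ((nat \<Rightarrow> nat) \<Rightarrow> real) \<Rightarrow> ((nat \<Rightarrow> nat) \<Rightarrow> real)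
     \<Rightarrow> ((nat \<Rightarrow> nat) \<Rightarrow> real) \<Rightarrow> ((nat \<Rightarrow> nat) \<times> real) set set set" where
  "periodic_orbits N A l k b =
     {\<tau>. \<exists>u\<in>susp_space N A l k b. (\<exists>T>0. susp_flow N A l k b T u = u) \<and>
          \<tau> = {susp_flow N A l k b t u | t. t \<ge> 0}}"

definition orbit_length ::
  "nat \<Rightarrow> (nat \<Rightarrow> nat \<Rightarrow> nat) \<Rightarrow> ((nat \<Rightarrow> nat) \<Rightarrow> real) \<Rightarrow> ((nat \<Rightarrow> nat) \<Rightarrow> real)
     \<Rightarrow> ((nat \<Rightarrow> nat) \<Rightarrow> real) \<Rightarrow> ((nat \<Rightarrow> nat) \<times> real) set set \<Rightarrow> real" where
  "orbit_length N A l k b \<tau> =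
     (let u = (SOME u. u \<in> \<tau>) in Inf {t. t > 0 \<and> susp_flow N A l k b t u = u})"

end

theory Submission
  imports Defs
begin


lemma funpow_shift: "(shift ^^ i) x = (\<lambda>m. x (m + i))"
  by (induction i arbitrary: x) (auto simp: shift_def funpow_Suc_right)

lemma shift_XA: "x \<in> XA N A \<Longrightarrow> shift x \<in> XA N A"
  by (auto simp: XA_def shift_def)

lemma funpow_shift_XA: "x \<in> XA N A \<Longrightarrow> (shift ^^ i) x \<in> XA N A"
  by (induction i) (auto simp: shift_XA)

definition cs :: "((nat\<Rightarrow>nat)\<Rightarrow>real) \<Rightarrow> ((nat\<Rightarrow>nat)\<Rightarrow>real) \<Rightarrow> nat \<Rightarrow> (nat\<Rightarrow>nat) \<Rightarrow> real" where
  "cs l k n x = (\<Sum>i<n. l ((shift ^^ i) x) - k ((shift ^^ i) x))"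

lemma funpow_comp_app: "(f ^^ (a + b)) x = (f ^^ b) ((f ^^ a) x)"
  by (metis add.commute comp_apply funpow_add)

lemma cs_add: "cs l k (a + b) x = cs l k a x + cs l k b ((shift ^^ a) x)"
proof (induction b)
  case 0 then show ?case by (simp add: cs_def)
next
  case (Suc b)
  have "cs l k (a + Suc b) x = cs l k (a + b) x + (l ((shift ^^ (a+b)) x) - k ((shift ^^ (a+b)) x))"
    by (simp add: cs_def)
  also have "\<dots> = cs l k a x + cs l k (Suc b) ((shift ^^ a) x)"
    using Suc by (simp add: cs_def funpow_comp_app)
  finally show ?case .
qed

lemma funpow_mult_fix: "(f ^^ p) x = x \<Longrightarrow> (f ^^ (j * p)) x = x"
  by (induction j) (auto simp: funpow_add)

lemma cs_mult: assumes "(shift ^^ p) x = x" shows "cs l k (j * p) x = real j * cs l k p x"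
proof (induction j)
  case 0 then show ?case by (simp add: cs_def)
next
  case (Suc j)
  have "cs l k (Suc j * p) x = cs l k (j * p + p) x" by (simp add: add.commute)
  also have "\<dots> = cs l k (j*p) x + cs l k p x"
    using cs_add[of l k "j*p" p x] funpow_mult_fix[OF assms, of j] by simp
  finally show ?case using Suc by (simp add: algebra_simps)
qed

lemma cs_rot: assumes "(shift ^^ p) x = x" shows "cs l k p ((shift ^^ b) x) = cs l k p x"
proof -
  have "cs l k (b + p) x = cs l k b x + cs l k p ((shift ^^ b) x)" by (rule cs_add)
  moreover have "cs l k (p + b) x = cs l k p x + cs l k b x"
    using cs_add[of l k p b x] assms by simp
  ultimately show ?thesis by (simp add: add.commute)
qed

lemma telescope_shift:
  fixes v :: "(nat \<Rightarrow> nat) \<Rightarrow> real"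
  shows "(\<Sum>i<q. v ((shift ^^ i) x) - v (shift ((shift ^^ i) x))) = v x - v ((shift ^^ q) x)"
  by (induction q) auto

lemma order_unit_bound:
  assumes "order_unit N A (\<lambda>x. l x - k x)"
  obtains M :: nat where "M > 0" and
    "\<And>x q. x \<in> XA N A \<Longrightarrow> q > 0 \<Longrightarrow> (shift ^^ q) x = x \<Longrightarrow> real M * cs l k q x \<ge> real q"
proof -
  have "cont_Z N A (\<lambda>x. 1)" by (auto simp: cont_Z_def)
  then obtain n :: nat where "in_HA_plus N A (\<lambda>x. real n * (l x - k x) - 1)"
    using assms unfolding order_unit_def by blast
  then obtain g v where g: "\<And>x. x \<in> XA N A \<Longrightarrow> g x \<ge> 0"
    and v: "\<And>x. x \<in> XA N A \<Longrightarrow> (real n * (l x - k x) - 1) - g x = v x - v (shift x)"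
    unfolding in_HA_plus_def cohomologous_def cont_Zplus_def by blast
  have key: "real n * cs l k q x \<ge> real q" if x: "x \<in> XA N A" and fx: "(shift ^^ q) x = x" for x q
  proof -
    have "(\<Sum>i<q. (real n * (l ((shift ^^ i) x) - k ((shift ^^ i) x)) - 1) - g ((shift ^^ i) x))
          = (\<Sum>i<q. v ((shift ^^ i) x) - v (shift ((shift ^^ i) x)))"
      by (rule sum.cong) (auto intro: v funpow_shift_XA x)
    also have "\<dots> = 0" using fx by (simp add: telescope_shift)
    finally have "(\<Sum>i<q. (real n * (l ((shift ^^ i) x) - k ((shift ^^ i) x)) - 1) - g ((shift ^^ i) x)) = 0" .
    then have "real n * cs l k q x - real q - (\<Sum>i<q. g ((shift ^^ i) x)) = 0"
      by (simp add: cs_def sum_subtractf sum_distrib_left right_diff_distrib)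
    moreover have "(\<Sum>i<q. g ((shift ^^ i) x)) \<ge> 0"
      by (rule sum_nonneg) (auto intro: g funpow_shift_XA x)
    ultimately show ?thesis by linarith
  qed
  show ?thesis
  proof (rule that[of "max n 1"])
    fix x q assume x: "x \<in> XA N A" and q: "q > 0" and fx: "(shift ^^ q) x = x"
    from key[OF x fx] q have "n > 0" by (cases "n = 0") auto
    then show "real (max n 1) * cs l k q x \<ge> real q" using key[OF x fx] by (simp add: max_absorb1)
  qed simp
qed




definition per :: "('a \<Rightarrow> 'a) \<Rightarrow> 'a \<Rightarrow> nat" where
  "per f x = (LEAST n. n > 0 \<and> (f ^^ n) x = x)"

definition isper :: "('a \<Rightarrow> 'a) \<Rightarrow> 'a \<Rightarrow> bool" where
  "isper f x \<longleftrightarrow> (\<exists>n>0. (f ^^ n) x = x)"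

lemma per_basic: assumes "isper f x" shows "per f x > 0" "(f ^^ per f x) x = x"
proof -
  from assms obtain n where "n > 0" "(f ^^ n) x = x" by (auto simp: isper_def)
  then have "n > 0 \<and> (f ^^ n) x = x" by simp
  then have "per f x > 0 \<and> (f ^^ per f x) x = x"
    unfolding per_def by (rule LeastI)
  then show "per f x > 0" "(f ^^ per f x) x = x" by auto
qed

lemma per_least: "0 < n \<Longrightarrow> (f ^^ n) x = x \<Longrightarrow> per f x \<le> n"
  unfolding per_def by (rule Least_le) auto

lemma funpow_mod: assumes "(f ^^ p) x = x" shows "(f ^^ n) x = (f ^^ (n mod p)) x"
proof -
  have "(f ^^ n) x = (f ^^ (n mod p + (n div p) * p)) x" by simp
  also have "\<dots> = (f ^^ (n mod p)) ((f ^^ ((n div p) * p)) x)"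
    by (simp only: funpow_add comp_apply)
  also have "\<dots> = (f ^^ (n mod p)) x" using funpow_mult_fix[OF assms] by simp
  finally show ?thesis .
qed

lemma per_dvd: assumes "isper f x" "(f ^^ n) x = x" shows "per f x dvd n"
proof -
  let ?p = "per f x"
  have "(f ^^ (n mod ?p)) x = x" using funpow_mod[OF per_basic(2)[OF assms(1)], of n] assms(2) by simp
  moreover have "n mod ?p < ?p" using per_basic(1)[OF assms(1)] by simp
  ultimately have "n mod ?p = 0" using per_least[of "n mod ?p" f x] by (cases "n mod ?p = 0") auto
  then show ?thesis by auto
qed

lemma per_dvd_iff: assumes "isper f x" shows "(f ^^ n) x = x \<longleftrightarrow> per f x dvd n"
  using per_dvd[OF assms] funpow_mult_fix[OF per_basic(2)[OF assms]] by (auto elim!: dvdE simp: mult.commute)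

lemma funpow_eq_dvd: assumes "isper f x" "(f ^^ a) x = (f ^^ b) x" "b \<le> a"
  shows "per f x dvd (a - b)"
proof -
  let ?p = "per f x"
  have pp: "(f ^^ ?p) x = x" "?p > 0" using per_basic[OF assms(1)] by auto
  define m where "m = Suc b * ?p - b"
  have "Suc b * 1 \<le> Suc b * ?p" using pp(2) by (intro mult_le_mono2) simp
  then have mb: "m + b = Suc b * ?p" unfolding m_def by arith
  have "(f ^^ (m + a)) x = (f ^^ (m + b)) x"
    by (metis assms(2) funpow_add comp_apply add.commute funpow_comp_app)
  also have "\<dots> = x" using mb funpow_mult_fix[OF pp(1)] by metis
  finally have "(f ^^ ((a - b) + (m + b))) x = x" using assms(3) by (simp add: algebra_simps)
  then have "(f ^^ (a - b)) x = x"
    using mb funpow_mult_fix[OF pp(1), of "Suc b"] by (simp add: funpow_add)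
  then show ?thesis using per_dvd[OF assms(1)] by blast
qed

lemma isper_funpow: "isper f x \<Longrightarrow> isper f ((f ^^ i) x)"
  unfolding isper_def by (metis funpow_add comp_apply add.commute funpow_comp_app)

lemma per_funpow: assumes "isper f x" shows "per f ((f ^^ i) x) = per f x"
proof -
  have y: "isper f ((f ^^ i) x)" using isper_funpow[OF assms] .
  have "(f ^^ per f x) ((f ^^ i) x) = (f ^^ i) x"
    by (metis per_basic(2)[OF assms] funpow_comp_app add.commute)
  then have d1: "per f ((f ^^ i) x) dvd per f x" using per_dvd[OF y] by blast
  have "(f ^^ (i + per f ((f ^^ i) x))) x = (f ^^ i) x"
    using per_basic(2)[OF y] by (simp add: funpow_comp_app)
  then have "per f x dvd (i + per f ((f ^^ i) x) - i)"
    using funpow_eq_dvd[OF assms, of "i + per f ((f ^^ i) x)" i] by simp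
  then have d2: "per f x dvd per f ((f ^^ i) x)" by simp
  show ?thesis using d1 d2 by (simp add: dvd_antisym)
qed

definition orb :: "('a \<Rightarrow> 'a) \<Rightarrow> 'a \<Rightarrow> 'a set" where
  "orb f x = range (\<lambda>i. (f ^^ i) x)"

lemma orb_finite: assumes "isper f x" shows "orb f x = (\<lambda>i. (f ^^ i) x) ` {..<per f x}"
  "card (orb f x) = per f x" "finite (orb f x)"
proof -
  let ?p = "per f x"
  have pp: "(f ^^ ?p) x = x" "?p > 0" using per_basic[OF assms] by auto
  show e: "orb f x = (\<lambda>i. (f ^^ i) x) ` {..<per f x}"
  proof -
    have "(f^^i) x \<in> (\<lambda>i. (f^^i) x) ` {..<per f x}" for i
      using funpow_mod[OF pp(1), of i] pp(2) by (intro image_eqI[where x="i mod per f x"]) auto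
    then show ?thesis by (auto simp: orb_def)
  qed
  have inj: "inj_on (\<lambda>i. (f ^^ i) x) {..<?p}"
  proof (rule inj_onI)
    fix a b assume a: "a \<in> {..<?p}" and b: "b \<in> {..<?p}" and e: "(f ^^ a) x = (f ^^ b) x"
    show "a = b"
    proof (cases "b \<le> a")
      case True
      then have "?p dvd a - b" using funpow_eq_dvd[OF assms e] by simp
      show ?thesis
      proof (rule ccontr)
        assume "a \<noteq> b"
        then have "0 < a - b" using True by simp
        then have "?p \<le> a - b" using \<open>?p dvd a - b\<close> by (rule dvd_imp_le[rotated])
        then show False using a by simp
      qed
    next
      case False
      then have "?p dvd b - a" using funpow_eq_dvd[OF assms e[symmetric]] by simp
      have "0 < b - a" using False by simp
      then have "?p \<le> b - a" using \<open>?p dvd b - a\<close> by (rule dvd_imp_le[rotated])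
      then show ?thesis using b by simp
    qed
  qed
  show "card (orb f x) = per f x" using e inj by (simp add: card_image)
  show "finite (orb f x)" using e by simp
qed

lemma orb_funpow: assumes "isper f x" shows "orb f ((f ^^ i) x) = orb f x"
proof
  show "orb f ((f ^^ i) x) \<subseteq> orb f x" unfolding orb_def
    by (auto simp: funpow_comp_app[symmetric])
  have pp: "(f ^^ per f x) x = x" "per f x > 0" using per_basic[OF assms] by auto
  show "orb f x \<subseteq> orb f ((f ^^ i) x)"
  proof
    fix y assume "y \<in> orb f x"
    then obtain j where y: "y = (f ^^ j) x" by (auto simp: orb_def)
    have y1: "y = (f ^^ (j + i * per f x)) x" using y funpow_mult_fix[OF pp(1), of i]
      by (simp add: funpow_add)
    have "i \<le> i * per f x" using pp(2) by simp
    then have e: "j + i * per f x = i + (j + i * per f x - i)" by arith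
    have "y = (f ^^ (j + i * per f x - i)) ((f ^^ i) x)"
      using y1 e funpow_comp_app[where f=f and a=i and b="j + i * per f x - i" and x=x] by simp
    then show "y \<in> orb f ((f ^^ i) x)" by (auto simp: orb_def)
  qed
qed




definition leg :: "((nat\<Rightarrow>nat)\<Rightarrow>real) \<Rightarrow> ((nat\<Rightarrow>nat)\<Rightarrow>real) \<Rightarrow> nat \<Rightarrow> (nat\<Rightarrow>nat) \<Rightarrow> real \<Rightarrow> bool" where
  "leg l k n x r \<longleftrightarrow> (\<forall>i<n. r - cs l k i x \<ge> l ((shift ^^ i) x))"

lemma cs_Suc: "cs l k (Suc n) x = cs l k n x + (l ((shift ^^ n) x) - k ((shift ^^ n) x))"
  by (simp add: cs_def)

locale susp =
  fixes N :: nat and A :: "nat \<Rightarrow> nat \<Rightarrow> nat" and l k b :: "(nat \<Rightarrow> nat) \<Rightarrow> real"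
  assumes trip: "suspension_triplet N A l k b"
begin

abbreviation "D \<equiv> susp_dom N A b"
abbreviation "S \<equiv> susp_step N A l k b"
abbreviation "R \<equiv> susp_rel N A l k b"
abbreviation "cls p \<equiv> R `` {p}"
abbreviation "flow \<equiv> susp_flow N A l k b"

lemma kb: "x \<in> XA N A \<Longrightarrow> b (shift x) \<le> k x"
  using trip unfolding suspension_triplet_def by force

lemma lb: "x \<in> XA N A \<Longrightarrow> b x \<le> l x"
  using trip unfolding suspension_triplet_def by force

lemma D_iff: "(x, r) \<in> D \<longleftrightarrow> x \<in> XA N A \<and> r \<ge> b x"
  by (simp add: susp_dom_def)

lemma S_iff: "(p, q) \<in> S \<longleftrightarrow> p \<in> D \<and> snd p \<ge> l (fst p) \<and> q = (shift (fst p), snd p - (l (fst p) - k (fst p)))"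
  by (cases p) (auto simp: susp_step_def)

lemma S_D: "(p, q) \<in> S \<Longrightarrow> q \<in> D"
  using kb[of "fst p"] unfolding S_iff by (cases p) (auto simp: D_iff shift_XA)

lemma S_sv: "single_valued S"
  by (auto simp: single_valued_def S_iff)

lemma Sstar_D: "(p, q) \<in> S\<^sup>* \<Longrightarrow> p \<in> D \<Longrightarrow> q \<in> D"
  by (induction rule: rtrancl_induct) (auto dest: S_D)

lemma leg_path: assumes "(x, r) \<in> D" "leg l k n x r"
  shows "((x, r), ((shift ^^ n) x, r - cs l k n x)) \<in> S\<^sup>*"
  using assms(2)
proof (induction n)
  case 0 then show ?case by (simp add: cs_def)
next
  case (Suc n)
  then have "leg l k n x r" by (simp add: leg_def)
  with Suc have p: "((x, r), ((shift ^^ n) x, r - cs l k n x)) \<in> S\<^sup>*" by blast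
  have "((shift ^^ n) x, r - cs l k n x) \<in> D" using Sstar_D[OF p assms(1)] .
  moreover have "r - cs l k n x \<ge> l ((shift ^^ n) x)" using Suc.prems by (simp add: leg_def)
  ultimately have "(((shift ^^ n) x, r - cs l k n x), ((shift ^^ Suc n) x, r - cs l k (Suc n) x)) \<in> S"
    by (simp add: S_iff cs_Suc algebra_simps)
  with p show ?case by (rule rtrancl_into_rtrancl)
qed

lemma path_leg: assumes "((x, r), q) \<in> S\<^sup>*"
  shows "\<exists>n. q = ((shift ^^ n) x, r - cs l k n x)"
  using assms
proof (induction rule: rtrancl_induct)
  case base then show ?case by (intro exI[of _ 0]) (simp add: cs_def)
next
  case (step y z)
  then obtain n where y: "y = ((shift ^^ n) x, r - cs l k n x)" by blast
  have "z = ((shift ^^ Suc n) x, r - cs l k (Suc n) x)" using step(2) y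
    by (simp add: S_iff cs_Suc algebra_simps)
  then show ?case by blast
qed

lemma join: assumes "(p, q) \<in> (S \<union> S\<inverse>)\<^sup>*" shows "\<exists>w. (p, w) \<in> S\<^sup>* \<and> (q, w) \<in> S\<^sup>*"
  using assms
proof (induction rule: rtrancl_induct)
  case base then show ?case by blast
next
  case (step q q')
  then obtain w where w: "(p, w) \<in> S\<^sup>*" "(q, w) \<in> S\<^sup>*" by blast
  show ?case
  proof (cases "(q, q') \<in> S")
    case True
    then have "(q, q') \<in> S\<^sup>*" by blast
    from single_valued_confluent[OF S_sv this w(2)]
    show ?thesis
    proof
      assume "(q', w) \<in> S\<^sup>*" then show ?thesis using w by blast
    next
      assume "(w, q') \<in> S\<^sup>*" then show ?thesis using w(1) by (meson rtrancl_trans rtrancl.rtrancl_refl)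
    qed
  next
    case False
    then have "(q', q) \<in> S" using step(2) by blast
    then show ?thesis using w by (meson converse_rtrancl_into_rtrancl)
  qed
qed

lemma R_equiv: "equiv D R"
proof -
  have "refl_on D R" by (auto simp: refl_on_def susp_rel_def)
  moreover have "sym R"
  proof -
    have "sym ((S \<union> S\<inverse>)\<^sup>*)" by (intro sym_rtrancl) (auto simp: sym_def)
    then show ?thesis unfolding susp_rel_def sym_def by blast
  qed
  moreover have "trans R"
    unfolding susp_rel_def trans_def by (auto intro: rtrancl_trans)
  moreover have "R \<subseteq> D \<times> D" by (auto simp: susp_rel_def)
  ultimately show ?thesis by (simp add: equiv_def)
qed

lemma R_sub: "R \<subseteq> D \<times> D" by (auto simp: susp_rel_def)

lemma cls_eq_iff: "p \<in> D \<Longrightarrow> q \<in> D \<Longrightarrow> cls p = cls q \<longleftrightarrow> (p, q) \<in> R"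
  using R_equiv by (simp add: equiv_class_eq_iff)

lemma K1: assumes "(x, r) \<in> D" "leg l k n x r"
  shows "cls (x, r) = cls ((shift ^^ n) x, r - cs l k n x)"
proof -
  have p: "((x, r), ((shift ^^ n) x, r - cs l k n x)) \<in> S\<^sup>*" by (rule leg_path[OF assms])
  have "((x, r), ((shift ^^ n) x, r - cs l k n x)) \<in> (S \<union> S\<inverse>)\<^sup>*"
    using rtrancl_mono[of S "S \<union> S\<inverse>"] p by blast
  moreover have "((shift ^^ n) x, r - cs l k n x) \<in> D" using Sstar_D[OF p assms(1)] .
  ultimately show ?thesis using assms(1) by (subst cls_eq_iff) (auto simp: susp_rel_def)
qed

lemma K2: assumes "(x, r) \<in> D" "(y, r') \<in> D" "cls (x, r) = cls (y, r')"
  shows "\<exists>a b. (shift ^^ a) x = (shift ^^ b) y \<and> r - cs l k a x = r' - cs l k b y"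
proof -
  have "((x, r), (y, r')) \<in> (S \<union> S\<inverse>)\<^sup>*" using assms cls_eq_iff by (auto simp: susp_rel_def)
  then obtain w where "((x, r), w) \<in> S\<^sup>*" "((y, r'), w) \<in> S\<^sup>*" using join by blast
  then obtain n1 n2 where "w = ((shift ^^ n1) x, r - cs l k n1 x)" "w = ((shift ^^ n2) y, r' - cs l k n2 y)"
    using path_leg by metis
  then have "(shift ^^ n1) x = (shift ^^ n2) y \<and> r - cs l k n1 x = r' - cs l k n2 y" by auto
  then show ?thesis by blast
qed

definition th :: "real \<Rightarrow> (nat \<Rightarrow> nat) \<times> real \<Rightarrow> (nat \<Rightarrow> nat) \<times> real" where
  "th t = (\<lambda>(x, r). (x, r + t))"

lemma S_th: "t \<ge> 0 \<Longrightarrow> (p, q) \<in> S \<Longrightarrow> (th t p, th t q) \<in> S"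
  by (cases p) (auto simp: S_iff th_def D_iff)

lemma R_th: assumes "t \<ge> 0" "(p, q) \<in> R" shows "(th t p, th t q) \<in> R"
proof -
  have "(p, q) \<in> (S \<union> S\<inverse>)\<^sup>*" using assms(2) by (simp add: susp_rel_def)
  then have "(th t p, th t q) \<in> (S \<union> S\<inverse>)\<^sup>*"
  proof (induction rule: rtrancl_induct)
    case base then show ?case by simp
  next
    case (step y z)
    then have "(th t y, th t z) \<in> S \<union> S\<inverse>" using S_th[OF assms(1)] by blast
    with step.IH show ?case by (rule rtrancl_into_rtrancl)
  qed
  moreover have "th t p \<in> D" "th t q \<in> D" using assms R_sub
    by (cases p, cases q, force simp: th_def D_iff)+
  ultimately show ?thesis by (simp add: susp_rel_def)
qed

lemma flow_cls: assumes "t \<ge> 0" "p \<in> D" shows "flow t (cls p) = cls (th t p)"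
proof -
  have flow_eq: "flow t P = R `` (th t ` P)" for P by (simp add: susp_flow_def th_def)
  have thD: "th t p \<in> D" using assms by (cases p) (auto simp: th_def D_iff)
  have "R `` (th t ` cls p) = cls (th t p)"
  proof
    show "R `` (th t ` cls p) \<subseteq> cls (th t p)"
    proof
      fix z assume "z \<in> R `` (th t ` cls p)"
      then obtain q where q: "(p, q) \<in> R" "(th t q, z) \<in> R" by auto
      have "(th t p, th t q) \<in> R" by (rule R_th[OF assms(1) q(1)])
      with q(2) have "(th t p, z) \<in> R" by (meson R_equiv equiv_def transD)
      then show "z \<in> cls (th t p)" by simp
    qed
    show "cls (th t p) \<subseteq> R `` (th t ` cls p)"
      using assms(2) R_equiv by (auto simp: equiv_def refl_on_def)
  qed
  then show ?thesis by (simp add: flow_eq)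
qed

lemma flow_cls': assumes "t \<ge> 0" "(x, r) \<in> D" shows "flow t (cls (x, r)) = cls (x, r + t)"
  using flow_cls[OF assms] by (simp add: th_def)

lemma space_iff: "u \<in> susp_space N A l k b \<longleftrightarrow> (\<exists>p\<in>D. u = cls p)"
  by (auto simp: susp_space_def quotient_def)

end



definition bnd :: "((nat\<Rightarrow>nat)\<Rightarrow>real) \<Rightarrow> ((nat\<Rightarrow>nat)\<Rightarrow>real) \<Rightarrow> nat \<Rightarrow> (nat\<Rightarrow>nat) \<Rightarrow> real" where
  "bnd l k n x = (\<Sum>i<n. \<bar>l ((shift ^^ i) x) + cs l k i x\<bar>)"

lemma leg_bnd: "r \<ge> bnd l k n x \<Longrightarrow> leg l k n x r"
proof -
  assume r: "r \<ge> bnd l k n x"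
  have "l ((shift ^^ i) x) + cs l k i x \<le> bnd l k n x" if "i < n" for i
  proof -
    have "l ((shift ^^ i) x) + cs l k i x \<le> \<bar>l ((shift ^^ i) x) + cs l k i x\<bar>" by simp
    also have "\<dots> \<le> bnd l k n x" unfolding bnd_def
      by (rule member_le_sum[where f="\<lambda>i. \<bar>l ((shift ^^ i) x) + cs l k i x\<bar>"]) (use that in auto)
    finally show ?thesis .
  qed
  with r show ?thesis by (force simp: leg_def)
qed

lemma bnd_nonneg: "bnd l k n x \<ge> 0" by (simp add: bnd_def sum_nonneg)

context susp begin

definition PP where "PP = {x \<in> XA N A. isper shift x}"
definition p where "p x = per shift x"
definition T where "T x = cs l k (p x) x"
definition r0 where "r0 x = \<bar>b x\<bar> + bnd l k (p x) x"
definition u where "u x = cls (x, r0 x)"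
definition orbit where "orbit w = {flow t w | t. t \<ge> 0}"

lemma cs_pos: assumes "x \<in> XA N A" "q > 0" "(shift ^^ q) x = x" shows "cs l k q x > 0"
proof -
  have ou: "order_unit N A (\<lambda>x. l x - k x)" using trip by (simp add: suspension_triplet_def)
  obtain M :: nat where "M > 0" "\<And>x q. x \<in> XA N A \<Longrightarrow> q > 0 \<Longrightarrow> (shift ^^ q) x = x \<Longrightarrow> real M * cs l k q x \<ge> real q"
    using order_unit_bound[OF ou] by metis
  then have "real M * cs l k q x \<ge> real q" using assms by blast
  moreover have "real q > 0" using assms(2) by simp
  ultimately have "real M * cs l k q x > 0" by linarith
  then show ?thesis using \<open>M > 0\<close> by (simp add: zero_less_mult_iff)
qed

lemma PP_basic: assumes "x \<in> PP" shows "p x > 0" "(shift ^^ p x) x = x" "T x > 0" "x \<in> XA N A"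
  "isper shift x"
proof -
  show "p x > 0" "(shift ^^ p x) x = x" using per_basic assms by (auto simp: PP_def p_def)
  then show "T x > 0" using cs_pos assms by (auto simp: PP_def T_def)
  show "x \<in> XA N A" "isper shift x" using assms by (auto simp: PP_def)
qed

lemma r0_D: "x \<in> XA N A \<Longrightarrow> r \<ge> r0 x \<Longrightarrow> (x, r) \<in> D"
  using bnd_nonneg[of l k "p x" x] by (auto simp: r0_def D_iff)

lemma r0_leg: "r \<ge> r0 x \<Longrightarrow> leg l k (p x) x r"
  using bnd_nonneg[of l k "p x" x] by (intro leg_bnd) (auto simp: r0_def)

lemma per_class: assumes "x \<in> PP" "r \<ge> r0 x" shows "flow (T x) (cls (x, r)) = cls (x, r)"
proof -
  have "flow (T x) (cls (x, r)) = cls (x, r + T x)"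
    using PP_basic[OF assms(1)] r0_D[OF _ assms(2)] by (intro flow_cls') auto
  also have "\<dots> = cls ((shift ^^ p x) x, r + T x - cs l k (p x) x)"
    using PP_basic[OF assms(1)] assms(2) r0_D[of x "r + T x"] r0_leg[of x "r + T x"]
    by (intro K1) auto
  also have "\<dots> = cls (x, r)" using PP_basic[OF assms(1)] by (simp add: T_def)
  finally show ?thesis .
qed

lemma periods: assumes "x \<in> PP" "r \<ge> r0 x" "t > 0" "flow t (cls (x, r)) = cls (x, r)"
  shows "t \<ge> T x"
proof -
  have xD: "(x, r) \<in> D" "(x, r + t) \<in> D" using r0_D PP_basic[OF assms(1)] assms(2,3) by auto
  have "cls (x, r + t) = cls (x, r)" using assms(4) flow_cls'[of t x r] xD assms(3) by simp
  from K2[OF xD(2) xD(1) this] obtain a1 b1 where ab: "(shift ^^ a1) x = (shift ^^ b1) x"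
    "r + t - cs l k a1 x = r - cs l k b1 x" by blast
  have isp: "isper shift x" and fx: "(shift ^^ p x) x = x" using PP_basic[OF assms(1)] by auto
  have fb: "(shift ^^ p x) ((shift ^^ c) x) = (shift ^^ c) x" for c
    using funpow_comp_app[where f=shift and a=c and b="p x" and x=x]
      funpow_comp_app[where f=shift and a="p x" and b=c and x=x] fx by (simp add: add.commute)
  show ?thesis
  proof (cases "b1 \<le> a1")
    case True
    then obtain j where j: "a1 - b1 = p x * j" using funpow_eq_dvd[OF isp ab(1)] by (auto simp: p_def)
    then have a1: "a1 = b1 + j * p x" using True by (simp add: algebra_simps)
    have "cs l k a1 x = cs l k b1 x + real j * T x"
      unfolding a1 cs_add cs_mult[OF fb] cs_rot[OF fx] T_def by simp
    then have "t = real j * T x" using ab(2) by simp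
    then have "j \<ge> 1" using assms(3) by (cases j) auto
    then show ?thesis using \<open>t = real j * T x\<close> PP_basic[OF assms(1)] by simp
  next
    case False
    then obtain j where j: "b1 - a1 = p x * j" using funpow_eq_dvd[OF isp ab(1)[symmetric]] by (auto simp: p_def)
    then have b1: "b1 = a1 + j * p x" using False by (simp add: algebra_simps)
    have "cs l k b1 x = cs l k a1 x + real j * T x"
      unfolding b1 cs_add cs_mult[OF fb] cs_rot[OF fx] T_def by simp
    then have "t = - real j * T x" using ab(2) by simp
    moreover have "real j * T x \<ge> 0" using PP_basic[OF assms(1)] by simp
    ultimately have False using assms(3) by linarith
    then show ?thesis ..
  qed
qed

end



context susp begin

definition sp where "sp = susp_space N A l k b"

lemma flow_add: assumes "w \<in> sp" "s \<ge> 0" "t \<ge> 0" shows "flow s (flow t w) = flow (s + t) w"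
proof -
  obtain q where q: "q \<in> D" "w = cls q" using assms(1) space_iff sp_def by auto
  have "th t q \<in> D" using q(1) assms(3) by (cases q) (auto simp: th_def D_iff)
  then show ?thesis using q assms by (cases q) (simp add: flow_cls th_def add_ac)
qed

lemma flow_0: "w \<in> sp \<Longrightarrow> flow 0 w = w"
  using flow_cls[of 0] space_iff sp_def by (auto simp: th_def split: prod.splits)

lemma flow_sp: assumes "w \<in> sp" "t \<ge> 0" shows "flow t w \<in> sp"
proof -
  obtain q where q: "q \<in> D" "w = cls q" using assms(1) space_iff sp_def by auto
  have "th t q \<in> D" using q(1) assms(2) by (cases q) (auto simp: th_def D_iff)
  then show ?thesis using q assms flow_cls space_iff sp_def by auto
qed

lemma flow_iter: assumes "w \<in> sp" "T0 \<ge> 0" "flow T0 w = w" shows "flow (real n * T0) w = w"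
proof (induction n)
  case 0 then show ?case using flow_0[OF assms(1)] by simp
next
  case (Suc n)
  have "flow (real (Suc n) * T0) w = flow (real n * T0) (flow T0 w)"
    using flow_add[OF assms(1), of "real n * T0" T0] assms(2) by (simp add: algebra_simps)
  then show ?case using Suc assms(3) by simp
qed

lemma big_n: assumes "T0 > 0" obtains n :: nat where "real n * T0 \<ge> t"
proof -
  obtain n :: nat where "t / T0 \<le> real n" using real_arch_simple by blast
  then have "t \<le> real n * T0" using assms by (simp add: divide_le_eq)
  then show ?thesis using that by blast
qed

lemma G: assumes "w \<in> sp" "T0 > 0" "flow T0 w = w" "t \<ge> 0"
  shows "orbit (flow t w) = orbit w"
proof
  show "orbit (flow t w) \<subseteq> orbit w"
  proof
    fix v assume "v \<in> orbit (flow t w)"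
    then obtain s where s: "s \<ge> 0" "v = flow s (flow t w)" by (auto simp: orbit_def)
    then have "v = flow (s + t) w" using flow_add[OF assms(1)] assms(4) by simp
    then show "v \<in> orbit w" unfolding orbit_def using s assms(4)
      by (intro CollectI exI[where x="s + t"]) auto
  qed
  show "orbit w \<subseteq> orbit (flow t w)"
  proof
    fix v assume "v \<in> orbit w"
    then obtain s where s: "s \<ge> 0" "v = flow s w" by (auto simp: orbit_def)
    obtain n :: nat where n: "real n * T0 \<ge> t" using big_n[OF assms(2)] by blast
    have "flow (s + real n * T0 - t) (flow t w) = flow (s + real n * T0) w"
      using flow_add[OF assms(1), of "s + real n * T0 - t" t] n s assms(4) by simp
    also have "\<dots> = flow s (flow (real n * T0) w)"
      using flow_add[OF assms(1), of s "real n * T0"] s assms(2) by simp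
    also have "\<dots> = v" using flow_iter[OF assms(1) _ assms(3)] assms(2) s by simp
    finally show "v \<in> orbit (flow t w)" unfolding orbit_def using n s
      by (intro CollectI exI[where x="s + real n * T0 - t"]) auto
  qed
qed

lemma u_sp: "x \<in> PP \<Longrightarrow> u x \<in> sp"
  using r0_D[of x "r0 x"] PP_basic space_iff sp_def u_def by auto

lemma u_per: "x \<in> PP \<Longrightarrow> flow (T x) (u x) = u x"
  using per_class[of x "r0 x"] u_def by auto

lemma flow_u: "x \<in> PP \<Longrightarrow> t \<ge> 0 \<Longrightarrow> flow t (u x) = cls (x, r0 x + t)"
  unfolding u_def using r0_D[of x "r0 x"] PP_basic by (intro flow_cls') auto

lemma tau_PO: assumes "x \<in> PP" shows "orbit (u x) \<in> periodic_orbits N A l k b"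
  unfolding periodic_orbits_def orbit_def
  using u_sp[OF assms] u_per[OF assms] PP_basic(3)[OF assms] sp_def by blast

lemma cls_as_u: assumes "y \<in> PP" "s \<ge> r0 y" shows "cls (y, s) = flow (s - r0 y) (u y)"
  using flow_u[OF assms(1), of "s - r0 y"] assms by simp

lemma orbit_cls: assumes "y \<in> PP" "s \<ge> r0 y" shows "orbit (cls (y, s)) = orbit (u y)"
  using cls_as_u[OF assms] G[OF u_sp[OF assms(1)] PP_basic(3)[OF assms(1)] u_per[OF assms(1)]] assms
  by simp

lemma tau_surj: assumes "\<tau> \<in> periodic_orbits N A l k b" shows "\<exists>y\<in>PP. \<tau> = orbit (u y)"
proof -
  obtain w T0 where w: "w \<in> sp" "T0 > 0" "flow T0 w = w" "\<tau> = orbit w"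
    using assms unfolding periodic_orbits_def orbit_def sp_def by blast
  obtain x r where xr: "(x, r) \<in> D" "w = cls (x, r)" using w(1) space_iff sp_def by auto
  have xX: "x \<in> XA N A" using xr by (simp add: D_iff)
  have wn: "w = cls (x, r + real n * T0)" for n
  proof -
    have "w = flow (real n * T0) w" using flow_iter[OF w(1) _ w(3)] w(2) by simp
    also have "\<dots> = cls (x, r + real n * T0)" using xr w(2) by (simp add: flow_cls')
    finally show ?thesis .
  qed
  have "(x, r + T0) \<in> D" using xr w(2) by (simp add: D_iff)
  moreover have "cls (x, r + T0) = cls (x, r)" using wn[of 1] xr(2) by simp
  ultimately obtain a1 b1 where ab: "(shift ^^ a1) x = (shift ^^ b1) x"
    "r + T0 - cs l k a1 x = r - cs l k b1 x" using K2[OF _ xr(1)] by blast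
  have "a1 \<noteq> b1" using ab(2) w(2) by auto
  define m where "m = min a1 b1"
  define y where "y = (shift ^^ m) x"
  have "isper shift y"
  proof (cases "b1 < a1")
    case True
    have "(shift ^^ (a1 - b1)) y = y" unfolding y_def m_def using True ab(1)
      by (simp add: funpow_comp_app[symmetric] min_def)
    then show ?thesis using True unfolding isper_def by (intro exI[of _ "a1 - b1"]) auto
  next
    case False
    then have "a1 < b1" using \<open>a1 \<noteq> b1\<close> by simp
    have "(shift ^^ (b1 - a1)) y = (shift ^^ (a1 + (b1 - a1))) x" unfolding y_def m_def using \<open>a1 < b1\<close>
      by (simp only: funpow_comp_app min_def) simp
    also have "\<dots> = y" using \<open>a1 < b1\<close> ab(1) unfolding y_def m_def by simp
    finally have "(shift ^^ (b1 - a1)) y = y" .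
    then show ?thesis using \<open>a1 < b1\<close> unfolding isper_def by (intro exI[of _ "b1 - a1"]) auto
  qed
  then have yP: "y \<in> PP" unfolding PP_def y_def using funpow_shift_XA[OF xX] by auto
  obtain n :: nat where n: "real n * T0 \<ge> \<bar>bnd l k m x - r\<bar> + \<bar>r0 y + cs l k m x - r\<bar>"
    using big_n[OF w(2)] by blast
  define R where "R = r + real n * T0"
  have n1: "R \<ge> bnd l k m x" and n2: "R - cs l k m x \<ge> r0 y"
    using n unfolding R_def by linarith+
  have "real n * T0 \<ge> 0" using w(2) by simp
  then have RD: "(x, R) \<in> D" using xr unfolding R_def D_iff by linarith
  have "w = cls (x, R)" using wn R_def by simp
  also have "\<dots> = cls (y, R - cs l k m x)" unfolding y_def by (rule K1[OF RD leg_bnd[OF n1]])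
  finally have "\<tau> = orbit (u y)" using orbit_cls[OF yP n2] w(4) by simp
  then show ?thesis using yP by blast
qed

end



context susp begin

lemma u_in_orbit: "x \<in> PP \<Longrightarrow> u x \<in> orbit (u x)"
  unfolding orbit_def using flow_0[OF u_sp] by force

lemma orbit_u_elem: assumes "x \<in> PP" "v \<in> orbit (u x)" obtains t where "t \<ge> 0" "v = cls (x, r0 x + t)"
  using assms flow_u unfolding orbit_def by blast

lemma tau_eq_iff: assumes "x \<in> PP" "y \<in> PP"
  shows "orbit (u x) = orbit (u y) \<longleftrightarrow> y \<in> orb shift x"
proof
  assume e: "orbit (u x) = orbit (u y)"
  then have "u y \<in> orbit (u x)" using u_in_orbit[OF assms(2)] by simp
  then obtain t where t: "t \<ge> 0" "u y = cls (x, r0 x + t)" using orbit_u_elem[OF assms(1)] by blast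
  have D1: "(y, r0 y) \<in> D" "(x, r0 x + t) \<in> D" using r0_D PP_basic assms t by auto
  obtain a1 b1 where ab: "(shift ^^ a1) y = (shift ^^ b1) x"
    using K2[OF D1] t(2) u_def by metis
  have py: "p y > 0" "(shift ^^ p y) y = y" using PP_basic[OF assms(2)] by auto
  have "a1 \<le> a1 * p y" using py by simp
  have "y = (shift ^^ (a1 * p y)) y" using funpow_mult_fix[OF py(2)] by simp
  also have "\<dots> = (shift ^^ (a1 + (a1 * p y - a1))) y" using \<open>a1 \<le> a1 * p y\<close> by simp
  also have "\<dots> = (shift ^^ (a1 * p y - a1)) ((shift ^^ b1) x)" by (simp only: funpow_comp_app ab)
  also have "\<dots> = (shift ^^ (b1 + (a1 * p y - a1))) x" by (simp only: funpow_comp_app)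
  finally show "y \<in> orb shift x" unfolding orb_def by blast
next
  assume "y \<in> orb shift x"
  then obtain i where y: "y = (shift ^^ i) x" by (auto simp: orb_def)
  define R where "R = \<bar>r0 x\<bar> + \<bar>bnd l k i x\<bar> + \<bar>r0 y + cs l k i x\<bar>"
  have R1: "R \<ge> r0 x" "R \<ge> bnd l k i x" "R - cs l k i x \<ge> r0 y" unfolding R_def by linarith+
  have xX: "x \<in> XA N A" using PP_basic[OF assms(1)] by simp
  have "orbit (u x) = orbit (cls (x, R))" using orbit_cls[OF assms(1) R1(1)] by simp
  also have "cls (x, R) = cls (y, R - cs l k i x)" unfolding y
    by (rule K1[OF r0_D[OF xX R1(1)] leg_bnd[OF R1(2)]])
  also have "orbit \<dots> = orbit (u y)" by (rule orbit_cls[OF assms(2) R1(3)])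
  finally show "orbit (u x) = orbit (u y)" .
qed

lemma tau_len: assumes "x \<in> PP" shows "orbit_length N A l k b (orbit (u x)) = T x"
proof -
  define v where "v = (SOME v. v \<in> orbit (u x))"
  have "v \<in> orbit (u x)" unfolding v_def using u_in_orbit[OF assms] by (rule someI)
  then obtain t where t: "t \<ge> 0" "v = cls (x, r0 x + t)" using orbit_u_elem[OF assms] by blast
  have r: "r0 x + t \<ge> r0 x" using t by simp
  have "Inf {s. s > 0 \<and> flow s v = v} = T x"
  proof (rule cInf_eq_minimum)
    show "T x \<in> {s. s > 0 \<and> flow s v = v}" using per_class[OF assms r] t PP_basic[OF assms] by simp
    show "T x \<le> s" if "s \<in> {s. s > 0 \<and> flow s v = v}" for s
      using periods[OF assms r, of s] that t by simp
  qed
  then show ?thesis unfolding orbit_length_def v_def by (simp add: Let_def)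
qed

end



lemma Per_val: assumes "x \<in> Per N A n" shows "x m = x (m mod n)"
proof -
  have f: "(shift ^^ n) x = x" using assms by (simp add: Per_def)
  have "(shift ^^ m) x 0 = (shift ^^ (m mod n)) x 0" using funpow_mod[OF f, of m] by simp
  then show ?thesis by (simp add: funpow_shift)
qed

lemma Per_card: assumes n0: "n > 0" shows "finite (Per N A n) \<and> card (Per N A n) \<le> N ^ n"
proof -
  let ?L = "{xs. set xs \<subseteq> {1..N} \<and> length xs = n}"
  have inj: "inj_on (\<lambda>x. map x [0..<n]) (Per N A n)"
  proof (rule inj_onI)
    fix x y assume x: "x \<in> Per N A n" and y: "y \<in> Per N A n" and e: "map x [0..<n] = map y [0..<n]"
    show "x = y"
    proof
      fix m
      show "x m = y m"
      proof -
        have "m mod n < n" using n0 by simp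
        moreover have "map x [0..<n] ! (m mod n) = map y [0..<n] ! (m mod n)" using e by (simp only:)
        ultimately have "x (m mod n) = y (m mod n)" by simp
        then show ?thesis using Per_val[OF x, of m] Per_val[OF y, of m] by simp
      qed
    qed
  qed
  have sub: "(\<lambda>x. map x [0..<n]) ` Per N A n \<subseteq> ?L"
    by (auto simp: Per_def XA_def)
  have fin: "finite ?L" by (rule finite_lists_length_eq) simp
  have "finite (Per N A n)" using finite_subset[OF sub fin] inj finite_imageD by blast
  moreover have "card (Per N A n) \<le> card ?L"
    using card_inj_on_le[OF inj sub fin] .
  moreover have "card ?L = N ^ n" by (simp add: card_lists_length_eq)
  ultimately show ?thesis by simp
qed



definition Wf :: "complex \<Rightarrow> complex" where "Wf z = - ln (1 - z)"
lemma W_series0: assumes "norm z < 1"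
  shows "(\<lambda>n. z ^ n / of_nat n) sums Wf z"
proof -
  have "(\<lambda>n. - ((- (-z)) ^ n) / of_nat n) sums ln (1 + - z)" using Ln_series'[of "-z"] assms by simp
  then have "(\<lambda>n. - (z ^ n / of_nat n)) sums ln (1 - z)" by simp
  then show ?thesis unfolding Wf_def using sums_minus by fastforce
qed

lemma W_series: assumes "norm z < 1"
  shows "((\<lambda>j. z ^ Suc j / of_nat (Suc j)) has_sum Wf z) UNIV"
proof -
  have s: "(\<lambda>j. z ^ Suc j / of_nat (Suc j)) sums Wf z"
  proof -
    have "(\<lambda>j. z ^ Suc j / of_nat (Suc j)) sums Wf z \<longleftrightarrow> (\<lambda>n. z ^ n / of_nat n) sums (Wf z + z ^ 0 / of_nat 0)"
      by (rule sums_Suc_iff)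
    also have "Wf z + z ^ 0 / of_nat 0 = Wf z" by simp
    finally show ?thesis using W_series0[OF assms] by blast
  qed
  have g: "summable (\<lambda>j. norm z ^ Suc j)" using assms by (simp add: summable_geometric)
  have bd: "norm (norm (z ^ Suc j / of_nat (Suc j))) \<le> norm z ^ Suc j" for j
  proof -
    have a: "0 \<le> norm z ^ Suc j" by (rule zero_le_power) simp
    have "norm (norm (z ^ Suc j / of_nat (Suc j))) = norm (z ^ Suc j / of_nat (Suc j))" by simp
    also have "\<dots> = norm z ^ Suc j / real (Suc j)"
      by (simp only: norm_divide norm_power norm_of_nat)
    also have "\<dots> \<le> norm z ^ Suc j / 1" by (rule divide_left_mono) (use a in auto)
    finally show ?thesis by simp
  qed
  have "summable (\<lambda>j. norm (z ^ Suc j / of_nat (Suc j)))"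
    by (rule summable_comparison_test'[OF g bd])
  then show ?thesis by (rule norm_summable_imp_has_sum[OF _ s])
qed

lemma W_exp: assumes "norm z < 1" shows "inverse (1 - z) = exp (Wf z)"
proof -
  have "1 - z \<noteq> 0"
  proof
    assume "1 - z = 0" then have "z = 1" by simp
    then show False using assms by simp
  qed
  then have e: "exp (ln (1 - z)) = 1 - z" by (rule exp_Ln)
  show ?thesis unfolding Wf_def exp_minus e ..
qed



context susp begin

context
  fixes M :: nat and s :: complex
  assumes Mpos: "M > 0"
    and Mb: "\<And>x q. x \<in> XA N A \<Longrightarrow> q > 0 \<Longrightarrow> (shift ^^ q) x = x \<Longrightarrow> real M * cs l k q x \<ge> real q"
    and N1: "N > 1" and sR: "Re s > real M * ln (real N)"
begin

definition fP :: "nat \<times> (nat \<Rightarrow> nat) \<Rightarrow> complex" where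
  "fP = (\<lambda>(n, x). (1 / of_nat (Suc n)) * exp (- s * of_real (cs l k (Suc n) x)))"

definition Ps where "Ps = Sigma UNIV (\<lambda>n. Per N A (Suc n))"

definition qq where "qq = exp (- Re s / real M)"

lemma Res_pos: "Re s > 0"
proof -
  have "ln (real N) > 0" using N1 by simp
  then have "real M * ln (real N) > 0" using Mpos by simp
  then show ?thesis using sR by linarith
qed

lemma Nqq: "real N * qq < 1"
proof -
  have "ln (real N) < Re s / real M" using sR Mpos by (simp add: field_simps)
  then have "exp (ln (real N)) < exp (Re s / real M)" by simp
  then have "real N < exp (Re s / real M)" using N1 by simp
  then show ?thesis unfolding qq_def by (simp add: exp_minus field_simps)
qed

lemma qq_pos: "qq > 0" by (simp add: qq_def)

lemma fP_bound: assumes "x \<in> Per N A (Suc n)" shows "norm (fP (n, x)) \<le> qq ^ Suc n"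
proof -
  have xX: "x \<in> XA N A" and fx: "(shift ^^ Suc n) x = x" using assms by (auto simp: Per_def)
  have c: "real M * cs l k (Suc n) x \<ge> real (Suc n)" using Mb[OF xX _ fx] by simp
  then have c': "cs l k (Suc n) x \<ge> real (Suc n) / real M" using Mpos by (simp add: field_simps)
  have "Re (- s * of_real (cs l k (Suc n) x)) = - Re s * cs l k (Suc n) x" by simp
  also have "\<dots> \<le> - Re s * (real (Suc n) / real M)"
    using c' Res_pos by (intro mult_left_mono_neg) auto
  also have "\<dots> = real (Suc n) * (- Re s / real M)" by simp
  finally have re: "Re (- s * of_real (cs l k (Suc n) x)) \<le> real (Suc n) * (- Re s / real M)" .
  have "norm (fP (n, x)) = (1 / real (Suc n)) * exp (Re (- s * of_real (cs l k (Suc n) x)))"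
    unfolding fP_def by (simp add: norm_mult norm_divide norm_of_nat del: of_nat_Suc)
  also have "\<dots> \<le> 1 * exp (real (Suc n) * (- Re s / real M))"
    by (intro mult_mono) (use re in auto)
  also have "\<dots> = qq ^ Suc n" unfolding qq_def by (simp only: mult_1 exp_of_nat_mult)
  finally show ?thesis .
qed

lemma fP_abs: "(\<lambda>y. norm (fP y)) summable_on Ps"
  unfolding Ps_def
proof (rule iffD2[OF Infinite_Sum.abs_summable_on_Sigma_iff], intro conjI ballI)
  fix n :: nat
  show "(\<lambda>x. norm (fP (n, x))) summable_on Per N A (Suc n)" using Per_card[of "Suc n" N A] by simp
next
  define a where "a n = (\<Sum>x\<in>Per N A (Suc n). norm (fP (n, x)))" for n
  have fin: "finite (Per N A (Suc n))" for n using Per_card[of "Suc n" N A] by simp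
  have a_eq: "(\<Sum>\<^sub>\<infinity>x\<in>Per N A (Suc n). norm (fP (n, x))) = a n" for n using fin by (simp add: a_def)
  have a_nn: "a n \<ge> 0" for n by (simp add: a_def sum_nonneg)
  have a_bd: "a n \<le> (real N * qq) ^ Suc n" for n
  proof -
    have "a n \<le> real (card (Per N A (Suc n))) * qq ^ Suc n"
      unfolding a_def by (rule sum_bounded_above) (rule fP_bound)
    also have "\<dots> \<le> real (N ^ Suc n) * qq ^ Suc n"
    proof (rule mult_right_mono)
      show "real (card (Per N A (Suc n))) \<le> real (N ^ Suc n)"
        using Per_card[of "Suc n" N A] by (simp only: of_nat_le_iff)
    qed (use qq_pos in simp)
    also have "\<dots> = (real N * qq) ^ Suc n" by (simp add: power_mult_distrib)
    finally show ?thesis .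
  qed
  have g: "summable (\<lambda>n. (real N * qq) ^ Suc n)"
    using Nqq qq_pos by (simp add: summable_geometric)
  have "summable (\<lambda>n. norm (a n))"
    by (rule summable_comparison_test'[OF g]) (use a_bd a_nn in auto)
  then have "(\<lambda>n. norm (a n)) summable_on UNIV"
    using summable_on_UNIV_nonneg_real_iff[of "\<lambda>n. norm (a n)"] by simp
  then show "(\<lambda>n. norm (\<Sum>\<^sub>\<infinity>x\<in>Per N A (Suc n). norm (fP (n, x)))) summable_on UNIV" by (simp only: a_eq)
qed

definition L where "L = infsum fP Ps"

lemma fP_has: "(fP has_sum L) Ps"
  unfolding L_def using abs_summable_summable[OF fP_abs] by simp

lemma series: "(\<lambda>n. \<Sum>x\<in>Per N A (Suc n). fP (n, x)) sums L"
proof -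
  have "((\<lambda>n. \<Sum>x\<in>Per N A (Suc n). fP (n, x)) has_sum L) UNIV"
    using fP_has unfolding Ps_def
    by (rule has_sum_SigmaD) (use Per_card in auto)
  then show ?thesis by (rule has_sum_imp_sums)
qed


definition gQ where "gQ = (\<lambda>(x, j). fP (Suc j * p x - 1, x))"
definition Q where "Q = Sigma PP (\<lambda>_. (UNIV :: nat set))"

lemma Suc_pred_mult: "p x > 0 \<Longrightarrow> Suc (Suc j * p x - 1) = Suc j * p x"
  by simp

lemma gQ_has: "(gQ has_sum L) Q"
proof -
  let ?hm = "\<lambda>(x, j). (Suc j * p x - 1, x)"
  let ?iv = "\<lambda>(n, x). (x, Suc n div p x - 1)"
  have "(gQ has_sum L) Q = (fP has_sum L) Ps"
  proof (rule has_sum_reindex_bij_witness[where i="?iv" and j="?hm"])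
    fix a assume "a \<in> Q"
    then obtain x j where a: "a = (x, j)" "x \<in> PP" by (auto simp: Q_def)
    have pp: "p x > 0" "(shift ^^ p x) x = x" "x \<in> XA N A" using PP_basic[OF a(2)] by auto
    show "?iv (?hm a) = a" using pp a by simp
    have e: "(shift ^^ (Suc (Suc j * p x - 1))) x = x"
      by (subst Suc_pred_mult[OF pp(1)]) (rule funpow_mult_fix[OF pp(2)])
    show "?hm a \<in> Ps" using e pp(3) by (auto simp: Ps_def Per_def a simp del: funpow.simps)
    show "fP (?hm a) = gQ a" by (simp add: gQ_def a)
  next
    fix bb assume "bb \<in> Ps"
    then obtain n x where bb: "bb = (n, x)" "x \<in> XA N A" "(shift ^^ Suc n) x = x"
      by (auto simp: Ps_def Per_def)
    have isp: "isper shift x" using bb by (auto simp: isper_def)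
    then have xP: "x \<in> PP" using bb by (simp add: PP_def)
    have pp: "p x > 0" using PP_basic[OF xP] by auto
    obtain q where q: "Suc n = p x * q" using per_dvd[OF isp bb(3)] by (auto simp: p_def)
    then have "q > 0" by (cases q) auto
    then have "Suc (Suc n div p x - 1) * p x - 1 = n" using q pp
      by (simp add: mult.commute)
    then show "?hm (?iv bb) = bb" using bb by simp
    show "?iv bb \<in> Q" using bb xP by (simp add: Q_def)
  qed simp
  then show ?thesis using fP_has by simp
qed

definition Fib where "Fib \<tau> = {(x, j). x \<in> PP \<and> orbit (u x) = \<tau>}"

definition Wt where "Wt \<tau> = Wf (exp (- s * of_real (orbit_length N A l k b \<tau>)))"

abbreviation "PO \<equiv> periodic_orbits N A l k b"

lemma gQ_group: "((\<lambda>a. gQ (snd a)) has_sum L) (Sigma PO Fib)"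
proof -
  have "((\<lambda>a. gQ (snd a)) has_sum L) (Sigma PO Fib) = (gQ has_sum L) Q"
  proof (rule has_sum_reindex_bij_witness[where i="\<lambda>(x, j). (orbit (u x), (x, j))" and j=snd])
    fix a :: "((nat \<Rightarrow> nat) \<times> real) set set \<times> ((nat \<Rightarrow> nat) \<times> nat)" assume "a \<in> Sigma PO Fib"
    then show "(\<lambda>(x, j). (orbit (u x), (x, j))) (snd a) = a" "snd a \<in> Q"
      by (auto simp: Fib_def Q_def)
  next
    fix bb assume "bb \<in> Q"
    then show "snd ((\<lambda>(x, j). (orbit (u x), (x, j))) bb) = bb"
      "(\<lambda>(x, j). (orbit (u x), (x, j))) bb \<in> Sigma PO Fib"
      by (auto simp: Q_def Fib_def tau_PO)
  qed auto
  then show ?thesis using gQ_has by simp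
qed


lemma orb_PP: assumes "x0 \<in> PP" "x \<in> orb shift x0"
  shows "x \<in> PP" "p x = p x0" "T x = T x0"
proof -
  obtain i where x: "x = (shift ^^ i) x0" using assms(2) by (auto simp: orb_def)
  have pp: "isper shift x0" "x0 \<in> XA N A" "(shift ^^ p x0) x0 = x0" using PP_basic[OF assms(1)] by auto
  show "x \<in> PP" unfolding PP_def x using isper_funpow[OF pp(1)] funpow_shift_XA[OF pp(2)] by simp
  show px: "p x = p x0" unfolding x p_def by (rule per_funpow[OF pp(1)])
  show "T x = T x0" unfolding T_def px unfolding x using cs_rot[OF pp(3)] by simp
qed

lemma norm_z: assumes "t > 0" shows "norm (exp (- s * of_real t)) < 1"
proof -
  have "Re (- s * of_real t) < 0" using Res_pos assms by simp
  then show ?thesis by simp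
qed

lemma gQ_val: assumes "x0 \<in> PP" "x \<in> orb shift x0"
  shows "gQ (x, j) = (1 / of_nat (p x0)) * ((exp (- s * of_real (T x0))) ^ Suc j / of_nat (Suc j))"
proof -
  note o = orb_PP[OF assms]
  have pp: "p x > 0" "(shift ^^ p x) x = x" using PP_basic[OF o(1)] by auto
  have "gQ (x, j) = (1 / of_nat (Suc j * p x)) * exp (- s * of_real (cs l k (Suc j * p x) x))"
    unfolding gQ_def fP_def using Suc_pred_mult[OF pp(1), of j] by (simp del: of_nat_Suc mult_Suc)
  also have "cs l k (Suc j * p x) x = real (Suc j) * T x0"
    using cs_mult[OF pp(2), of l k "Suc j"] o by (simp add: T_def del: of_nat_Suc mult_Suc)
  also have "exp (- s * of_real (real (Suc j) * T x0)) = exp (of_nat (Suc j) * (- s * of_real (T x0)))"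
    by (simp add: algebra_simps del: of_nat_Suc)
  also have "\<dots> = (exp (- s * of_real (T x0))) ^ Suc j" by (rule exp_of_nat_mult)
  finally show ?thesis using o by (simp add: field_simps del: of_nat_Suc mult_Suc power_Suc)
qed

lemma inner: assumes "\<tau> \<in> PO" shows "(gQ has_sum Wt \<tau>) (Fib \<tau>)"
proof -
  obtain x0 where x0: "x0 \<in> PP" "\<tau> = orbit (u x0)" using tau_surj[OF assms] by blast
  define z where "z = exp (- s * of_real (T x0))"
  have T0: "T x0 > 0" "p x0 > 0" using PP_basic[OF x0(1)] by auto
  have nz: "norm z < 1" unfolding z_def by (rule norm_z[OF T0(1)])
  have Wt: "Wt \<tau> = Wf z" unfolding Wt_def z_def x0(2) tau_len[OF x0(1)] ..
  have fib: "Fib \<tau> = Sigma (orb shift x0) (\<lambda>_. UNIV)"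
    using tau_eq_iff[OF x0(1)] orb_PP(1)[OF x0(1)] x0(2) by (auto simp: Fib_def)
  have fo: "finite (orb shift x0)" "card (orb shift x0) = p x0"
    using orb_finite[OF PP_basic(5)[OF x0(1)]] by (auto simp: p_def)
  have in1: "((\<lambda>j. gQ (x, j)) has_sum (1 / of_nat (p x0)) * Wf z) UNIV" if "x \<in> orb shift x0" for x
  proof -
    have "((\<lambda>j. (1 / of_nat (p x0)) * (z ^ Suc j / of_nat (Suc j))) has_sum (1 / of_nat (p x0)) * Wf z) UNIV"
      by (rule has_sum_cmult_right[OF W_series[OF nz]])
    then show ?thesis using gQ_val[OF x0(1) that] z_def by simp
  qed
  have out: "((\<lambda>x. (1 / of_nat (p x0)) * Wf z) has_sum Wf z) (orb shift x0)"
    using fo T0 by (intro has_sum_finiteI) (auto simp: field_simps)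
  have summ: "gQ summable_on Sigma (orb shift x0) (\<lambda>_. UNIV)"
  proof (rule summable_on_subset)
    show "gQ summable_on Q" using gQ_has by (rule has_sum_imp_summable)
    show "Sigma (orb shift x0) (\<lambda>_. UNIV) \<subseteq> Q" using orb_PP(1)[OF x0(1)] by (auto simp: Q_def)
  qed
  have "(gQ has_sum Wf z) (Sigma (orb shift x0) (\<lambda>_. UNIV))"
    by (rule has_sum_SigmaI[OF in1 out summ])
  then show ?thesis unfolding fib Wt .
qed

lemma Wt_has: "(Wt has_sum L) PO"
  using gQ_group by (rule has_sum_SigmaD) (use inner in simp)

lemma prod_lim: "((\<lambda>F. \<Prod>\<tau>\<in>F. inverse (1 - exp (- s * of_real (orbit_length N A l k b \<tau>)))) \<longlongrightarrow> exp L)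
    (finite_subsets_at_top PO)"
proof -
  have "((\<lambda>F. exp (sum Wt F)) \<longlongrightarrow> exp L) (finite_subsets_at_top PO)"
    using Wt_has unfolding has_sum_def by (rule tendsto_exp)
  moreover have "eventually (\<lambda>F. exp (sum Wt F) = (\<Prod>\<tau>\<in>F. inverse (1 - exp (- s * of_real (orbit_length N A l k b \<tau>)))))
      (finite_subsets_at_top PO)"
  proof (rule eventually_finite_subsets_at_top_weakI)
    fix F assume F: "finite F" "F \<subseteq> PO"
    have "exp (sum Wt F) = (\<Prod>\<tau>\<in>F. exp (Wt \<tau>))" by (rule exp_sum[OF F(1)])
    also have "\<dots> = (\<Prod>\<tau>\<in>F. inverse (1 - exp (- s * of_real (orbit_length N A l k b \<tau>))))"
    proof (rule prod.cong[OF refl])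
      fix \<tau> assume "\<tau> \<in> F"
      then have "\<tau> \<in> PO" using F by blast
      then obtain x0 where x0: "x0 \<in> PP" "\<tau> = orbit (u x0)" using tau_surj by blast
      have "orbit_length N A l k b \<tau> > 0" using tau_len[OF x0(1)] PP_basic(3)[OF x0(1)] x0(2) by simp
      then show "exp (Wt \<tau>) = inverse (1 - exp (- s * of_real (orbit_length N A l k b \<tau>)))"
        unfolding Wt_def using W_exp[OF norm_z] by simp
    qed
    finally show "exp (sum Wt F) = (\<Prod>\<tau>\<in>F. inverse (1 - exp (- s * of_real (orbit_length N A l k b \<tau>))))" .
  qed
  ultimately show ?thesis using tendsto_cong by fast
qed


lemma main_s: "\<exists>L::complex.
       (\<lambda>n. (1 / of_nat (Suc n)) *
          (\<Sum>x\<in>Per N A (Suc n).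
             exp (- s * of_real (\<Sum>i<Suc n. l ((shift ^^ i) x) - k ((shift ^^ i) x))))) sums L
     \<and> ((\<lambda>F. \<Prod>\<tau>\<in>F. inverse (1 - exp (- s * of_real (orbit_length N A l k b \<tau>))))
          \<longlongrightarrow> exp L) (finite_subsets_at_top (periodic_orbits N A l k b))"
proof (intro exI conjI)
  have "(1 / of_nat (Suc n)) *
          (\<Sum>x\<in>Per N A (Suc n). exp (- s * of_real (\<Sum>i<Suc n. l ((shift ^^ i) x) - k ((shift ^^ i) x))))
        = (\<Sum>x\<in>Per N A (Suc n). fP (n, x))" for n
    by (simp add: fP_def cs_def sum_distrib_left)
  then show "(\<lambda>n. (1 / of_nat (Suc n)) *
          (\<Sum>x\<in>Per N A (Suc n).
             exp (- s * of_real (\<Sum>i<Suc n. l ((shift ^^ i) x) - k ((shift ^^ i) x))))) sums L"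
    using series by simp
  show "((\<lambda>F. \<Prod>\<tau>\<in>F. inverse (1 - exp (- s * of_real (orbit_length N A l k b \<tau>))))
          \<longlongrightarrow> exp L) (finite_subsets_at_top (periodic_orbits N A l k b))"
    by (rule prod_lim)
qed

end

lemma main: assumes "N > 1" shows "\<exists>s0::real. \<forall>s::complex. Re s > s0 \<longrightarrow>
    (\<exists>L::complex.
       (\<lambda>n. (1 / of_nat (Suc n)) *
          (\<Sum>x\<in>Per N A (Suc n).
             exp (- s * of_real (\<Sum>i<Suc n. l ((shift ^^ i) x) - k ((shift ^^ i) x))))) sums L
     \<and> ((\<lambda>F. \<Prod>\<tau>\<in>F. inverse (1 - exp (- s * of_real (orbit_length N A l k b \<tau>))))
          \<longlongrightarrow> exp L) (finite_subsets_at_top (periodic_orbits N A l k b)))"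
proof -
  have ou: "order_unit N A (\<lambda>x. l x - k x)" using trip by (simp add: suspension_triplet_def)
  obtain M :: nat where M: "M > 0" "\<And>x q. x \<in> XA N A \<Longrightarrow> q > 0 \<Longrightarrow> (shift ^^ q) x = x \<Longrightarrow> real M * cs l k q x \<ge> real q"
    using order_unit_bound[OF ou] by metis
  show ?thesis
    by (rule exI[of _ "real M * ln (real N)"], intro allI impI, rule main_s[OF M(1) M(2) assms]) auto
qed

end



theorem proposition4p2:
  fixes N :: nat and A :: "nat \<Rightarrow> nat \<Rightarrow> nat"
    and l k b :: "(nat \<Rightarrow> nat) \<Rightarrow> real"
  assumes "N > 1"
    and "zero_one_matrix N A"
    and "irreducible_matrix N A"
    and "\<not> permutation_matrix N A"
    and "suspension_triplet N A l k b"
  shows "\<exists>s0::real. \<forall>s::complex. Re s > s0 \<longrightarrow>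
    (\<exists>L::complex.
       (\<lambda>n. (1 / of_nat (Suc n)) *
          (\<Sum>x\<in>Per N A (Suc n).
             exp (- s * of_real (\<Sum>i<Suc n. l ((shift ^^ i) x) - k ((shift ^^ i) x))))) sums L
     \<and> ((\<lambda>F. \<Prod>\<tau>\<in>F. inverse (1 - exp (- s * of_real (orbit_length N A l k b \<tau>))))
          \<longlongrightarrow> exp L) (finite_subsets_at_top (periodic_orbits N A l k b)))"
  proof -
  interpret susp N A l k b by unfold_locales (rule assms(5))
  show ?thesis by (rule main[OF assms(1)])
qed

end
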